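(* Consider one execution of the Modified NCB algorithm with inputs $k$ and $W$, where $\sqrt T\le W\le T$, and assume $968kS\le T$. On the event $E$, no arm $j$ with $\mu_j\le\frac{\mu^*}{64}$ is pulled in any round of Phase 2.
   Context: Bandit setup: $k$ arms, arm $i$ a distribution on $[0,1]$ with mean $\mu_i$, $\mu^*:=\max_i\mu_i>0$. $\log$ is the natural logarithm; $c:=3$; $T$ is the overall horizon and $S:=\frac{c^2\log T}{\mu^*}$. Modified NCB algorithm (inputs $k$, window $W$): maintain counts $n_i$ and empirical means $\widehat\mu_i$ (both initially $0$), round index $t=1$. Phase 1: while $\max_i n_i\widehat\mu_i\le 420c^2\log W$ and $t\le W$, pull a uniformly random arm, update, increment $t$. Phase 2: while $t\le W$, pull an arm maximizing $\overline{\mathrm{NCB}}_i:=\widehat\mu_i+2c\sqrt{2\widehat\mu_i\log W/n_i}$ (ties arbitrary), update, increment $t$. Canonical model: a $k\times T$ table $(Y_{i,s})$ of independent entries with $Y_{i,s}$ distributed as arm $i$, the $s$-th pull of arm $i$ yielding $Y_{i,s}$; $\widehat\mu_{i,s}:=\frac1s\sum_{r=1}^sY_{i,r}$. The uniform choices in Phase 1 are $U_1,U_2,\dots$, independent uniform in $[k]$ (independent of the table). Events: $E_1$: for every integer $r$ with $128kS\le r\le T$ and every arm $i$, the number of $r'\le r$ with $U_{r'}=i$ is at least $\frac{r}{2k}$ and at most $\frac{3r}{2k}$. $E_2$: for every arm $i$ with $\mu_i>\frac{\mu^*}{64}$ and every integer $s$ with $64S\le s\le T$, $|\mu_i-\widehat\mu_{i,s}|\le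 c\sqrt{\frac{\mu_i\log T}{s}}$. $E_3$: for every arm $j$ with $\mu_j\le\frac{\mu^*}{64}$ and every integer $s$ with $64S\le s\le T$, $\widehat\mu_{j,s}<\frac{\mu^*}{32}$. $E:=E_1\cap E_2\cap E_3$. *)

theory Defs
  imports Complex_Main
begin

text \<open>Arms are indexed by 1..k; rounds by 1..W. The canonical model table is Y i s
  (s-th pull of arm i, s >= 1); U r is the r-th uniform choice. A (deterministic)
  execution of Modified NCB is a pull sequence a :: nat => nat (a t = arm pulled in
  round t) consistent with the algorithm for some resolution of ties.\<close>

definition ncb_c :: real where "ncb_c = 3"

definition mu_star :: "nat \<Rightarrow> (nat \<Rightarrow> real) \<Rightarrow> real" where
  "mu_star k mu = Max (mu ` {1..k})"

definition S_param :: "nat \<Rightarrow> real \<Rightarrow> real" where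
  "S_param T mustar = ncb_c ^ 2 * ln (real T) / mustar"

definition emp_mean :: "(nat \<Rightarrow> nat \<Rightarrow> real) \<Rightarrow> nat \<Rightarrow> nat \<Rightarrow> real" where
  "emp_mean Y i s = (\<Sum>r=1..s. Y i r) / real s"

definition cnt :: "(nat \<Rightarrow> nat) \<Rightarrow> nat \<Rightarrow> nat \<Rightarrow> nat" where
  "cnt a i t = card {r \<in> {1..<t}. a r = i}"

definition muhat :: "(nat \<Rightarrow> nat \<Rightarrow> real) \<Rightarrow> (nat \<Rightarrow> nat) \<Rightarrow> nat \<Rightarrow> nat \<Rightarrow> real" where
  "muhat Y a i t = emp_mean Y i (cnt a i t)"

definition phase1_cond :: "nat \<Rightarrow> nat \<Rightarrow> (nat \<Rightarrow> nat \<Rightarrow> real) \<Rightarrow> (nat \<Rightarrow> nat) \<Rightarrow> nat \<Rightarrow> bool" where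
  "phase1_cond k W Y a t =
     (Max ((\<lambda>i. real (cnt a i t) * muhat Y a i t) ` {1..k}) \<le> 420 * ncb_c ^ 2 * ln (real W))"

text \<open>round t belongs to Phase 1 iff the Phase-1 condition held at the start of every
  round 1..t (once it fails, the algorithm moves to Phase 2 for good)\<close>
definition in_phase1 :: "nat \<Rightarrow> nat \<Rightarrow> (nat \<Rightarrow> nat \<Rightarrow> real) \<Rightarrow> (nat \<Rightarrow> nat) \<Rightarrow> nat \<Rightarrow> bool" where
  "in_phase1 k W Y a t = (\<forall>t'\<in>{1..t}. phase1_cond k W Y a t')"

definition ncb_index :: "nat \<Rightarrow> (nat \<Rightarrow> nat \<Rightarrow> real) \<Rightarrow> (nat \<Rightarrow> nat) \<Rightarrow> nat \<Rightarrow> nat \<Rightarrow> real" where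
  "ncb_index W Y a i t =
     muhat Y a i t + 2 * ncb_c * sqrt (2 * muhat Y a i t * ln (real W) / real (cnt a i t))"

definition is_execution ::
  "nat \<Rightarrow> nat \<Rightarrow> (nat \<Rightarrow> nat \<Rightarrow> real) \<Rightarrow> (nat \<Rightarrow> nat) \<Rightarrow> (nat \<Rightarrow> nat) \<Rightarrow> bool" where
  "is_execution k W Y U a =
     (\<forall>t\<in>{1..W}.
        (in_phase1 k W Y a t \<longrightarrow> a t = U t) \<and>
        (\<not> in_phase1 k W Y a t \<longrightarrow>
           a t \<in> {1..k} \<and> (\<forall>i\<in>{1..k}. ncb_index W Y a i t \<le> ncb_index W Y a (a t) t)))"

definition event_E1 :: "nat \<Rightarrow> nat \<Rightarrow> real \<Rightarrow> (nat \<Rightarrow> nat) \<Rightarrow> bool" where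
  "event_E1 k T S U =
     (\<forall>r::nat. 128 * real k * S \<le> real r \<and> r \<le> T \<longrightarrow>
        (\<forall>i\<in>{1..k}. real r / (2 * real k) \<le> real (card {r'\<in>{1..r}. U r' = i}) \<and>
                     real (card {r'\<in>{1..r}. U r' = i}) \<le> 3 * real r / (2 * real k)))"

definition event_E2 :: "nat \<Rightarrow> nat \<Rightarrow> (nat \<Rightarrow> real) \<Rightarrow> (nat \<Rightarrow> nat \<Rightarrow> real) \<Rightarrow> bool" where
  "event_E2 k T mu Y =
     (\<forall>i\<in>{1..k}. mu i > mu_star k mu / 64 \<longrightarrow>
        (\<forall>s::nat. 1 \<le> s \<and> 64 * S_param T (mu_star k mu) \<le> real s \<and> s \<le> T \<longrightarrow>
           \<bar>mu i - emp_mean Y i s\<bar> \<le> ncb_c * sqrt (mu i * ln (real T) / real s)))"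

definition event_E3 :: "nat \<Rightarrow> nat \<Rightarrow> (nat \<Rightarrow> real) \<Rightarrow> (nat \<Rightarrow> nat \<Rightarrow> real) \<Rightarrow> bool" where
  "event_E3 k T mu Y =
     (\<forall>j\<in>{1..k}. mu j \<le> mu_star k mu / 64 \<longrightarrow>
        (\<forall>s::nat. 1 \<le> s \<and> 64 * S_param T (mu_star k mu) \<le> real s \<and> s \<le> T \<longrightarrow>
           emp_mean Y j s < mu_star k mu / 32))"

definition event_E :: "nat \<Rightarrow> nat \<Rightarrow> (nat \<Rightarrow> real) \<Rightarrow> (nat \<Rightarrow> nat \<Rightarrow> real) \<Rightarrow> (nat \<Rightarrow> nat) \<Rightarrow> bool" where
  "event_E k T mu Y U =
     (event_E1 k T (S_param T (mu_star k mu)) U \<and> event_E2 k T mu Y \<and> event_E3 k T mu Y)"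

end

theory Submission
  imports Defs
begin

lemma cnt_mono: "t \<le> t' \<Longrightarrow> cnt a i t \<le> cnt a i t'"
  unfolding cnt_def by (rule card_mono) auto

lemma cnt_le: "cnt a i t \<le> t - 1"
proof -
  have "cnt a i t \<le> card {1..<t}" unfolding cnt_def by (rule card_mono) auto
  thus ?thesis by simp
qed

lemma cnt_U: "(\<forall>r\<in>{1..<t}. a r = U r) \<Longrightarrow> cnt a i t = card {r'\<in>{1..t-1}. U r' = i}"
proof -
  assume h: "\<forall>r\<in>{1..<t}. a r = U r"
  have "{r \<in> {1..<t}. a r = i} = {r'\<in>{1..t-1}. U r' = i}" using h by auto
  thus ?thesis unfolding cnt_def by simp
qed

lemma sum_emp: "real n * emp_mean Y i n = (\<Sum>r=1..n. Y i r)"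
  unfolding emp_mean_def by (cases "n = 0") auto

lemma sum_Y_mono:
  fixes Y :: "nat \<Rightarrow> nat \<Rightarrow> real"
  assumes "\<forall>s\<ge>1. 0 \<le> Y i s" "n \<le> m"
  shows "(\<Sum>r=1..n. Y i r) \<le> (\<Sum>r=1..m. Y i r)"
proof -
  have "{1..m} = {1..n} \<union> {n<..m}" using assms(2) by (auto; linarith)
  hence "(\<Sum>r=1..m. Y i r) = (\<Sum>r=1..n. Y i r) + (\<Sum>r\<in>{n<..m}. Y i r)"
    by (simp add: sum.union_disjoint ivl_disj_int)
  moreover have "(\<Sum>r\<in>{n<..m}. Y i r) \<ge> 0" using assms(1) by (intro sum_nonneg) auto
  ultimately show ?thesis by simp
qed

lemma ln2_ge: "ln (2::real) \<ge> 1/10"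
proof -
  have "exp (1/10::real) \<le> 1 + 2 * (1/10)" by (rule real_exp_bound_lemma) auto
  thus ?thesis by (subst ln_ge_iff) auto
qed

lemma bad_index:
  fixes m ms n L lw :: real
  assumes "0 \<le> m" "m < ms/32" "n \<ge> 64 * (9 * L / ms)" "0 < L" "0 \<le> lw" "lw \<le> L" "0 < ms"
  shows "m + 2 * 3 * sqrt (2 * m * lw / n) < 3 * ms / 32"
proof -
  have "64 * (9 * L / ms) > 0" using assms by simp
  hence npos: "n > 0" using assms by linarith
  have "2 * m * lw \<le> 2 * (ms/32) * L" using assms by (intro mult_mono) auto
  hence "2 * m * lw \<le> ms * L / 16" by simp
  hence "2 * m * lw / n \<le> ms * L / 16 / n" using npos by (intro divide_right_mono) auto
  also have "\<dots> \<le> ms * L / 16 / (576 * L / ms)"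
    using assms npos by (intro divide_left_mono) auto
  also have "\<dots> = (ms/96)^2" using assms by (simp add: field_simps power2_eq_square)
  finally have "sqrt (2 * m * lw / n) \<le> sqrt ((ms/96)^2)"
    by (rule real_sqrt_le_mono)
  moreover have "sqrt ((ms/96)^2) = ms/96" using assms by simp
  ultimately have "sqrt (2 * m * lw / n) \<le> ms/96" by simp
  thus ?thesis using assms by linarith
qed

lemma good_muhat:
  fixes m ms n L :: real
  assumes "\<bar>ms - m\<bar> \<le> 3 * sqrt (ms * L / n)" "n \<ge> 64 * (9 * L / ms)" "0 < L" "0 < ms"
  shows "m \<ge> 7 * ms / 8"
proof -
  have "64 * (9 * L / ms) > 0" using assms by simp
  hence npos: "n > 0" using assms by linarith
  have "ms * L / n \<le> ms * L / (576 * L / ms)"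
    using assms npos by (intro divide_left_mono) auto
  also have "\<dots> = (ms/24)^2" using assms by (simp add: field_simps power2_eq_square)
  finally have "sqrt (ms * L / n) \<le> sqrt ((ms/24)^2)"
    by (rule real_sqrt_le_mono)
  moreover have "sqrt ((ms/24)^2) = ms/24" using assms by simp
  ultimately have "sqrt (ms * L / n) \<le> ms/24" by simp
  thus ?thesis using assms by linarith
qed

lemma sum_bound:
  fixes s ms L :: real
  assumes "0 \<le> s" "s \<le> 192 * (9 * L / ms) + 5/2" "0 < ms" "ms \<le> 1" "L \<ge> 1/10"
  shows "s * ms + 3 * sqrt (ms * L * s) \<le> 1890 * L"
proof -
  have a: "s * ms \<le> 1728 * L + 5/2"
  proof -
    have "s * ms \<le> (192 * (9 * L / ms) + 5/2) * ms" using assms by (intro mult_right_mono) auto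
    also have "\<dots> = 1728 * L + 5/2 * ms" using assms by (simp add: field_simps)
    finally show ?thesis using assms by linarith
  qed
  have "ms * L * s = L * (s * ms)" by simp
  also have "\<dots> \<le> L * (1728 * L + 5/2)" using a assms by (intro mult_left_mono) auto
  also have "\<dots> \<le> (42 * L)^2" using assms by (simp add: power2_eq_square algebra_simps)
  finally have "sqrt (ms * L * s) \<le> sqrt ((42 * L)^2)"
    by (rule real_sqrt_le_mono)
  moreover have "sqrt ((42 * L)^2) = 42 * L" using assms by (subst real_sqrt_abs) simp
  ultimately have "sqrt (ms * L * s) \<le> 42 * L" by linarith
  thus ?thesis using a assms by linarith
qed

lemma good_sum:
  fixes s e mu ms L :: real
  assumes "s > 0" "\<bar>mu - e\<bar> \<le> 3 * sqrt (mu * L / s)" "0 \<le> mu" "mu \<le> ms" "0 \<le> L"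
  shows "s * e \<le> s * ms + 3 * sqrt (ms * L * s)"
proof -
  have "e \<le> mu + 3 * sqrt (mu * L / s)" using assms by linarith
  hence "s * e \<le> s * (mu + 3 * sqrt (mu * L / s))" using assms by (intro mult_left_mono) auto
  also have "\<dots> = s * mu + 3 * (sqrt (s^2) * sqrt (mu * L / s))" using assms by (simp add: algebra_simps)
  also have "\<dots> = s * mu + 3 * sqrt (s^2 * (mu * L / s))"
    by (subst real_sqrt_mult) (rule refl)
  also have "s^2 * (mu * L / s) = mu * L * s" using assms by (simp add: power2_eq_square)
  finally have "s * e \<le> s * mu + 3 * sqrt (mu * L * s)" .
  also have "\<dots> \<le> s * ms + 3 * sqrt (ms * L * s)"
    using assms by (intro add_mono mult_left_mono real_sqrt_le_mono mult_right_mono) auto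
  finally show ?thesis .
qed

theorem lemma10:
  fixes k W T :: nat and mu :: "nat \<Rightarrow> real" and Y :: "nat \<Rightarrow> nat \<Rightarrow> real"
    and U a :: "nat \<Rightarrow> nat"
  assumes k_pos: "1 \<le> k"
    and mu_range: "\<forall>i\<in>{1..k}. 0 \<le> mu i \<and> mu i \<le> 1"
    and mustar_pos: "mu_star k mu > 0"
    and Y_range: "\<forall>i\<in>{1..k}. \<forall>s\<ge>1. 0 \<le> Y i s \<and> Y i s \<le> 1"
    and U_range: "\<forall>r\<ge>1. U r \<in> {1..k}"
    and W_lower: "sqrt (real T) \<le> real W"
    and W_upper: "W \<le> T"
    and T_large: "968 * real k * S_param T (mu_star k mu) \<le> real T"
    and onE: "event_E k T mu Y U"
    and exec: "is_execution k W Y U a"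
  shows "\<forall>t\<in>{1..W}. \<not> in_phase1 k W Y a t \<longrightarrow>
           (\<forall>j\<in>{1..k}. mu j \<le> mu_star k mu / 64 \<longrightarrow> a t \<noteq> j)"
proof (intro ballI impI)
  fix t j
  assume t: "t \<in> {1..W}" and np: "\<not> in_phase1 k W Y a t" and j: "j \<in> {1..k}"
    and jbad: "mu j \<le> mu_star k mu / 64"
  define ms where "ms = mu_star k mu"
  define S where "S = S_param T ms"
  define L where "L = ln (real T)"
  have msp: "ms > 0" using mustar_pos ms_def by simp
  have E1: "event_E1 k T S U" and E2: "event_E2 k T mu Y" and E3: "event_E3 k T mu Y"
    using onE unfolding event_E_def S_def ms_def by auto
  have fin: "finite (mu ` {1..k})" "mu ` {1..k} \<noteq> {}" using k_pos by auto
  have "ms \<in> mu ` {1..k}" unfolding ms_def mu_star_def using fin by (rule Max_in)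
  then obtain i0 where i0: "i0 \<in> {1..k}" "mu i0 = ms" by auto
  have mu_le: "\<forall>i\<in>{1..k}. mu i \<le> ms" unfolding ms_def mu_star_def using fin by auto
  have ms1: "ms \<le> 1" using i0 mu_range by auto
  have Sdef: "S = 9 * L / ms" unfolding S_def S_param_def L_def ncb_c_def by simp
  have tW: "1 \<le> t" "t \<le> W" using t by auto
  have ex: "\<exists>t'. t' \<in> {1..t} \<and> \<not> phase1_cond k W Y a t'" using np unfolding in_phase1_def by auto
  define t0 where "t0 = (LEAST t'. t' \<in> {1..t} \<and> \<not> phase1_cond k W Y a t')"
  have t0: "t0 \<in> {1..t}" "\<not> phase1_cond k W Y a t0"
    using LeastI_ex[OF ex] unfolding t0_def by auto
  have before: "\<And>r. r < t0 \<Longrightarrow> r \<in> {1..t} \<Longrightarrow> phase1_cond k W Y a r"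
    using not_less_Least unfolding t0_def by blast
  have aU: "\<forall>r\<in>{1..<t0}. a r = U r"
  proof
    fix r assume r: "r \<in> {1..<t0}"
    have "in_phase1 k W Y a r" unfolding in_phase1_def
      using before r t0(1) by auto
    moreover have "r \<in> {1..W}" using r t0(1) tW by auto
    ultimately show "a r = U r" using exec unfolding is_execution_def by auto
  qed
  have W1: "W \<ge> 1" using tW by simp
  have lnW0: "ln (real W) \<ge> 0" using W1 by simp
  have p1: "phase1_cond k W Y a 1"
  proof -
    have "(\<lambda>i. real (cnt a i 1) * muhat Y a i 1) ` {1..k} = {0}"
      using k_pos unfolding cnt_def by auto
    thus ?thesis unfolding phase1_cond_def using lnW0 by (simp add: ncb_c_def)
  qed
  have t02: "t0 \<ge> 2" using t0 p1 by (cases "t0 = 1") auto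
  have T2: "T \<ge> 2" using t02 t0(1) tW W_upper by auto
  have L10: "L \<ge> 1/10"
  proof -
    have "ln (2::real) \<le> ln (real T)" using T2 by simp
    thus ?thesis using ln2_ge L_def by linarith
  qed
  have Lpos: "L > 0" using L10 by simp
  have lnWL: "ln (real W) \<le> L" unfolding L_def using W1 W_upper by simp
  have lnWL2: "ln (real W) \<ge> L / 2"
  proof -
    have "ln (sqrt (real T)) \<le> ln (real W)" using W_lower T2 W1 by (subst ln_le_cancel_iff) auto
    moreover have "ln (sqrt (real T)) = L / 2" unfolding L_def using T2 by (simp add: ln_sqrt)
    ultimately show ?thesis by simp
  qed
  have Spos: "S > 0" using Sdef Lpos msp by simp
  have S9L: "S \<ge> 9 * L" unfolding Sdef using Lpos msp ms1
    by (simp add: field_simps mult_left_le)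
  have Tbig: "968 * real k * S \<le> real T" using T_large S_def ms_def by simp
  have TS: "968 * S \<le> real T"
  proof -
    have "968 * S \<le> 968 * real k * S" using k_pos Spos by simp
    thus ?thesis using Tbig by linarith
  qed
  have cntY: "\<And>i r. 0 \<le> Y i r \<or> r < 1 \<or> i \<notin> {1..k}" using Y_range by auto
  have long: "real (t0 - 1) \<ge> 128 * real k * S"
  proof (rule ccontr)
    assume sh: "\<not> ?thesis"
    obtain i where i: "i \<in> {1..k}"
      and big: "real (cnt a i t0) * muhat Y a i t0 > 420 * ncb_c ^ 2 * ln (real W)"
      using t0(2) fin unfolding phase1_cond_def using k_pos by (auto simp: Max_le_iff)
    define r0 where "r0 = nat \<lceil>128 * real k * S\<rceil>"
    have r0a: "real r0 \<ge> 128 * real k * S" unfolding r0_def by linarith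
    have "128 * real k * S \<ge> 0" using Spos by simp
    hence r0b: "real r0 < 128 * real k * S + 1" unfolding r0_def by linarith
    have r0T: "r0 \<le> T"
    proof -
      have "128 * real k * S \<le> real T" using Tbig Spos k_pos by simp
      hence "\<lceil>128 * real k * S\<rceil> \<le> int T" by (metis ceiling_le of_int_of_nat_eq)
      thus ?thesis unfolding r0_def by (simp only: nat_le_iff)
    qed
    have tr: "t0 - 1 \<le> r0" using sh r0a by linarith
    have n_eq: "cnt a i t0 = card {r'\<in>{1..t0-1}. U r' = i}" using cnt_U[OF aU] .
    have "card {r'\<in>{1..t0-1}. U r' = i} \<le> card {r'\<in>{1..r0}. U r' = i}"
      using tr by (intro card_mono) auto
    moreover have "real (card {r'\<in>{1..r0}. U r' = i}) \<le> 3 * real r0 / (2 * real k)"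
      using E1 r0a r0T i unfolding event_E1_def by blast
    ultimately have nle: "real (cnt a i t0) \<le> 3 * real r0 / (2 * real k)" using n_eq by simp
    have "3 * real r0 / (2 * real k) \<le> 3 * (128 * real k * S + 1) / (2 * real k)"
      using r0b k_pos by (intro divide_right_mono) auto
    also have "\<dots> = 192 * S + 3 / (2 * real k)" using k_pos by (simp add: field_simps)
    also have "\<dots> \<le> 192 * S + 3 / 2" using k_pos by (simp add: field_simps)
    finally have nle2: "real (cnt a i t0) \<le> 192 * S + 3/2" using nle by linarith
    define s where "s = nat \<lceil>192 * S + 3/2\<rceil>"
    have sa: "real s \<ge> 192 * S + 3/2" unfolding s_def by linarith
    have "192 * S + 3/2 \<ge> 0" using Spos by simp
    hence sb: "real s < 192 * S + 5/2" unfolding s_def by linarith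
    have ns: "cnt a i t0 \<le> s" using nle2 sa by linarith
    have s1: "1 \<le> s" using sa Spos by linarith
    have s64: "64 * S_param T (mu_star k mu) \<le> real s" using sa Spos S_def ms_def by simp
    have sT: "s \<le> T" using sb TS S9L L10 by linarith
    have "real (cnt a i t0) * muhat Y a i t0 = (\<Sum>r=1..cnt a i t0. Y i r)"
      unfolding muhat_def by (rule sum_emp)
    also have "\<dots> \<le> (\<Sum>r=1..s. Y i r)" using ns Y_range i by (intro sum_Y_mono) auto
    also have "\<dots> = real s * emp_mean Y i s" by (rule sum_emp[symmetric])
    also have "\<dots> \<le> real s * ms + 3 * sqrt (ms * L * real s)"
    proof (cases "mu i > mu_star k mu / 64")
      case True
      have "\<bar>mu i - emp_mean Y i s\<bar> \<le> ncb_c * sqrt (mu i * ln (real T) / real s)"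
        using E2 i True s1 s64 sT unfolding event_E2_def by blast
      thus ?thesis using s1 mu_range mu_le i Lpos
        by (intro good_sum) (auto simp: ncb_c_def L_def)
    next
      case False
      have "emp_mean Y i s < ms / 32"
        using E3 i False s1 s64 sT unfolding event_E3_def ms_def by auto
      hence "real s * emp_mean Y i s \<le> real s * ms" using msp by (intro mult_left_mono) auto
      moreover have "sqrt (ms * L * real s) \<ge> 0" using msp Lpos by simp
      ultimately show ?thesis by linarith
    qed
    also have "\<dots> \<le> 1890 * L"
      using sb Sdef msp ms1 L10 by (intro sum_bound) auto
    finally have "real (cnt a i t0) * muhat Y a i t0 \<le> 1890 * L" .
    moreover have "420 * ncb_c ^ 2 * ln (real W) \<ge> 1890 * L"
      using lnWL2 unfolding ncb_c_def by simp
    ultimately show False using big by linarith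
  qed
  have t0T: "t0 - 1 \<le> T" using t0(1) tW W_upper by auto
  have cnt_big: "\<And>i. i \<in> {1..k} \<Longrightarrow> real (cnt a i t) \<ge> 64 * S \<and> cnt a i t \<le> T \<and> 1 \<le> cnt a i t"
  proof -
    fix i assume i: "i \<in> {1..k}"
    have "real (card {r'\<in>{1..t0-1}. U r' = i}) \<ge> real (t0 - 1) / (2 * real k)"
      using E1 long t0T i unfolding event_E1_def by blast
    moreover have "real (t0 - 1) / (2 * real k) \<ge> 128 * real k * S / (2 * real k)"
      using long k_pos by (intro divide_right_mono) auto
    moreover have "128 * real k * S / (2 * real k) = 64 * S" using k_pos by simp
    moreover have "cnt a i t0 \<le> cnt a i t" using t0(1) by (intro cnt_mono) auto
    ultimately have g: "real (cnt a i t) \<ge> 64 * S" using cnt_U[OF aU, of i] by simp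
    moreover have "cnt a i t \<le> T" using cnt_le[of a i t] tW W_upper by simp
    moreover have "1 \<le> cnt a i t" using g Spos by (cases "cnt a i t") auto
    ultimately show "real (cnt a i t) \<ge> 64 * S \<and> cnt a i t \<le> T \<and> 1 \<le> cnt a i t" by simp
  qed
  show "a t \<noteq> j"
  proof
    assume atj: "a t = j"
    have cmp: "ncb_index W Y a i0 t \<le> ncb_index W Y a j t"
      using exec np tW i0 atj unfolding is_execution_def by auto
    have cj: "real (cnt a j t) \<ge> 64 * S" "cnt a j t \<le> T" "1 \<le> cnt a j t" using cnt_big j by auto
    have ci: "real (cnt a i0 t) \<ge> 64 * S" "cnt a i0 t \<le> T" "1 \<le> cnt a i0 t" using cnt_big i0 by auto
    have s64j: "64 * S_param T (mu_star k mu) \<le> real (cnt a j t)" using cj S_def ms_def by simp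
    have s64i: "64 * S_param T (mu_star k mu) \<le> real (cnt a i0 t)" using ci S_def ms_def by simp
    have mj: "muhat Y a j t < ms / 32"
      using E3 j jbad cj s64j unfolding event_E3_def muhat_def ms_def by auto
    have mj0: "muhat Y a j t \<ge> 0"
      unfolding muhat_def emp_mean_def using Y_range j by (auto intro!: sum_nonneg divide_nonneg_nonneg)
    have "ncb_index W Y a j t < 3 * ms / 32"
      unfolding ncb_index_def ncb_c_def
      using bad_index[OF mj0 mj _ Lpos lnW0 lnWL msp] cj(1) Sdef by simp
    moreover have "\<bar>mu i0 - muhat Y a i0 t\<bar> \<le> ncb_c * sqrt (mu i0 * ln (real T) / real (cnt a i0 t))"
    proof -
      have gi0: "mu i0 > mu_star k mu / 64" using i0 msp ms_def by simp
      have "\<forall>s::nat. 1 \<le> s \<and> 64 * S_param T (mu_star k mu) \<le> real s \<and> s \<le> T \<longrightarrow>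
           \<bar>mu i0 - emp_mean Y i0 s\<bar> \<le> ncb_c * sqrt (mu i0 * ln (real T) / real s)"
        using E2 i0(1) gi0 unfolding event_E2_def by blast
      thus ?thesis using ci s64i unfolding muhat_def by blast
    qed
    hence "muhat Y a i0 t \<ge> 7 * ms / 8"
      using good_muhat[of ms "muhat Y a i0 t" L "real (cnt a i0 t)"] i0 ci(1) Sdef Lpos msp
      by (simp add: ncb_c_def L_def)
    moreover have "ncb_index W Y a i0 t \<ge> muhat Y a i0 t"
    proof -
      have mi0: "muhat Y a i0 t \<ge> 0"
        unfolding muhat_def emp_mean_def using Y_range i0 by (auto intro!: sum_nonneg divide_nonneg_nonneg)
      thus ?thesis unfolding ncb_index_def ncb_c_def using lnW0 by simp
    qed
    ultimately show False using cmp msp by linarith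
  qed
qed

end
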